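(* Let $W$ be an irreducible euclidean Coxeter group not of type $\widetilde A_n$ and let $\sigma$ be a chamber of its Coxeter complex. Then the bipartite line of $\sigma$ is the axis (min-set) of each of the two bipartite Coxeter elements $w_1w_0$ and $w_0w_1$ produced by $\sigma$.
   Context: $W$ acts on a euclidean space $E$, generated by reflections in the facets of a euclidean simplex with dihedral angles submultiples of $\pi$, properly and cocompactly; chambers are images of the simplex. The diagram $\Gamma$ (a tree here) has a unique bipartition, giving a partition $S_0\sqcup S_1$ of the reflections in the facets of $\sigma$ into pairwise-commuting sets; $w_j$ is the product of the reflections in $S_j$; $F_j$ is the face of $\sigma$ cut out by the hyperplanes of the reflections in $S_j$ and $B_j$ is its affine hull. $B_0,B_1$ are disjoint and there is a unique pair of points $x_0\in B_0,x_1\in B_1$ realizing the distance between them; the bipartite line of $\sigma$ is the line through $x_0,x_1$. The min-set (axis) of an isometry is the set of points it moves the minimal distance. *)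

theory Defs
  imports "HOL-Analysis.Analysis"
begin

text \<open>A simplex sigma in a euclidean space of dimension n = DIM('a) is given by its
  n+1 vertices v 0, ..., v n.  Facet i is the facet opposite to vertex i.\<close>

definition simplex_of :: "(nat \<Rightarrow> 'a::euclidean_space) \<Rightarrow> 'a set" where
  "simplex_of v = convex hull (v ` {0..DIM('a)})"

definition facet_hyp :: "(nat \<Rightarrow> 'a::euclidean_space) \<Rightarrow> nat \<Rightarrow> 'a set" where
  "facet_hyp v i = affine hull (v ` ({0..DIM('a)} - {i}))"

definition reflect_in :: "'a::euclidean_space set \<Rightarrow> 'a \<Rightarrow> 'a" where
  "reflect_in H x = 2 *\<^sub>R closest_point H x - x"

definition inward_normal :: "(nat \<Rightarrow> 'a::euclidean_space) \<Rightarrow> nat \<Rightarrow> 'a" where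
  "inward_normal v i = v i - closest_point (facet_hyp v i) (v i)"

definition vec_angle :: "'a::euclidean_space \<Rightarrow> 'a \<Rightarrow> real" where
  "vec_angle u w = arccos ((u \<bullet> w) / (norm u * norm w))"

definition dihedral_angle :: "(nat \<Rightarrow> 'a::euclidean_space) \<Rightarrow> nat \<Rightarrow> nat \<Rightarrow> real" where
  "dihedral_angle v i j = pi - vec_angle (inward_normal v i) (inward_normal v j)"

definition coxeter_simplex :: "(nat \<Rightarrow> 'a::euclidean_space) \<Rightarrow> bool" where
  "coxeter_simplex v \<longleftrightarrow>
     inj_on v {0..DIM('a)} \<and> \<not> affine_dependent (v ` {0..DIM('a)}) \<and>
     (\<forall>i\<in>{0..DIM('a)}. \<forall>j\<in>{0..DIM('a)}. i \<noteq> j \<longrightarrow>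
        (\<exists>m::nat. m \<ge> 2 \<and> dihedral_angle v i j = pi / real m))"

text \<open>Edges of the Coxeter diagram: m_ij >= 3, i.e. dihedral angle different from pi/2
  (equivalently, s_i and s_j do not commute).\<close>
definition cox_edge :: "(nat \<Rightarrow> 'a::euclidean_space) \<Rightarrow> nat \<Rightarrow> nat \<Rightarrow> bool" where
  "cox_edge v i j \<longleftrightarrow> i \<noteq> j \<and> dihedral_angle v i j \<noteq> pi / 2"

definition diagram_connected :: "(nat \<Rightarrow> 'a::euclidean_space) \<Rightarrow> bool" where
  "diagram_connected v \<longleftrightarrow>
     (\<forall>i\<in>{0..DIM('a)}. \<forall>j\<in>{0..DIM('a)}.
        (\<lambda>a b. a \<in> {0..DIM('a)} \<and> b \<in> {0..DIM('a)} \<and> cox_edge v a b)\<^sup>*\<^sup>* i j)"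

definition irreducible_coxeter :: "(nat \<Rightarrow> 'a::euclidean_space) \<Rightarrow> bool" where
  "irreducible_coxeter v \<longleftrightarrow> diagram_connected v"

text \<open>Type A~_n (n >= 2): the diagram is a single cycle through all n+1 nodes
  (connected and 2-regular), all labels equal to 3.  (A~_1, label infinity, cannot
  occur: facets of a simplex with dihedral angles pi/m are never parallel.)\<close>
definition type_A_tilde :: "(nat \<Rightarrow> 'a::euclidean_space) \<Rightarrow> bool" where
  "type_A_tilde v \<longleftrightarrow>
     DIM('a) \<ge> 2 \<and> diagram_connected v \<and>
     (\<forall>i\<in>{0..DIM('a)}. card {j\<in>{0..DIM('a)}. cox_edge v i j} = 2) \<and>
     (\<forall>i\<in>{0..DIM('a)}. \<forall>j\<in>{0..DIM('a)}. cox_edge v i j \<longrightarrow> dihedral_angle v i j = pi / 3)"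

text \<open>Product of the (pairwise commuting) reflections in the facets indexed by S.\<close>
definition prod_refl :: "(nat \<Rightarrow> 'a::euclidean_space) \<Rightarrow> nat set \<Rightarrow> 'a \<Rightarrow> 'a" where
  "prod_refl v S = fold (\<lambda>i f. reflect_in (facet_hyp v i) \<circ> f) (sorted_list_of_set S) id"

definition face_of_walls :: "(nat \<Rightarrow> 'a::euclidean_space) \<Rightarrow> nat set \<Rightarrow> 'a set" where
  "face_of_walls v S = simplex_of v \<inter> \<Inter> (facet_hyp v ` S)"

definition face_hull :: "(nat \<Rightarrow> 'a::euclidean_space) \<Rightarrow> nat set \<Rightarrow> 'a set" where
  "face_hull v S = affine hull (face_of_walls v S)"

definition min_set :: "('a::metric_space \<Rightarrow> 'a) \<Rightarrow> 'a set" where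
  "min_set g = {x. \<forall>y. dist x (g x) \<le> dist y (g y)}"

end

theory Submission
  imports Defs
begin


lemma setup_hyp:
  fixes v :: "nat \<Rightarrow> 'a::euclidean_space"
  assumes inj: "inj_on v {0..DIM('a)}" and ind: "\<not> affine_dependent (v ` {0..DIM('a)})"
    and i: "i \<in> {0..DIM('a)}"
  shows "\<exists>a c. norm a = 1 \<and> facet_hyp v i = {x. a \<bullet> x = c}"
proof -
  let ?I = "{0..DIM('a)}"
  have sub: "v ` (?I - {i}) \<subseteq> v ` ?I" by auto
  have ind2: "\<not> affine_dependent (v ` (?I - {i}))"
    using affine_independent_subset[OF ind sub] .
  have "card (v ` (?I - {i})) = DIM('a)"
    using inj i by (subst card_image) (auto intro: inj_on_subset)
  hence "aff_dim (v ` (?I - {i})) = DIM('a) - 1"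
    using aff_dim_affine_independent[OF ind2] by simp
  then obtain a b where ab: "a \<noteq> 0" "affine hull (v ` (?I - {i})) = {x. a \<bullet> x = b}"
    using aff_dim_eq_hyperplane by blast
  have "{x. a \<bullet> x = b} = {x. (a /\<^sub>R norm a) \<bullet> x = b / norm a}"
    using ab(1) by (auto simp: field_simps)
  thus ?thesis using ab unfolding facet_hyp_def
    by (intro exI[of _ "a /\<^sub>R norm a"] exI[of _ "b / norm a"]) auto
qed

lemma vertex_in_hyp:
  fixes v :: "nat \<Rightarrow> 'a::euclidean_space"
  assumes inj: "inj_on v {0..DIM('a)}" and ind: "\<not> affine_dependent (v ` {0..DIM('a)})"
    and i: "i \<in> {0..DIM('a)}" and j: "j \<in> {0..DIM('a)}"
  shows "v j \<in> facet_hyp v i \<longleftrightarrow> j \<noteq> i"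
proof
  assume "j \<noteq> i" thus "v j \<in> facet_hyp v i" unfolding facet_hyp_def using j by (auto intro!: hull_inc)
next
  assume h: "v j \<in> facet_hyp v i"
  show "j \<noteq> i"
  proof
    assume "j = i"
    have "v ` ({0..DIM('a)} - {i}) = v ` {0..DIM('a)} - {v i}" using inj i by (auto simp: inj_on_def)
    hence "v i \<in> affine hull (v ` {0..DIM('a)} - {v i})" using h \<open>j = i\<close> unfolding facet_hyp_def by simp
    thus False using ind i unfolding affine_dependent_def by auto
  qed
qed

lemma spanning:
  fixes v :: "nat \<Rightarrow> 'a::euclidean_space"
  assumes inj: "inj_on v {0..DIM('a)}" and ind: "\<not> affine_dependent (v ` {0..DIM('a)})"
  shows "\<exists>\<mu>. sum \<mu> {0..DIM('a)} = 0 \<and> w = (\<Sum>j\<in>{0..DIM('a)}. \<mu> j *\<^sub>R v j)"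
proof -
  let ?I = "{0..DIM('a)}"
  have "card (v ` ?I) = DIM('a) + 1" using inj by (simp add: card_image)
  hence "aff_dim (v ` ?I) = DIM('a)" using aff_dim_affine_independent[OF ind] by simp
  hence "affine hull (v ` ?I) = UNIV" using aff_dim_eq_full by blast
  hence "v 0 + w \<in> affine hull (v ` ?I)" by simp
  then obtain u where u: "sum u (v ` ?I) = 1" "(\<Sum>x\<in>v ` ?I. u x *\<^sub>R x) = v 0 + w"
    by (auto simp: affine_hull_finite)
  have u1: "(\<Sum>j\<in>?I. u (v j)) = 1" using u(1) inj by (simp add: sum.reindex)
  have u2: "(\<Sum>j\<in>?I. u (v j) *\<^sub>R v j) = v 0 + w" using u(2) inj by (simp add: sum.reindex)
  define \<mu> where "\<mu> j = u (v j) - (if j = 0 then 1 else 0)" for j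
  have "sum \<mu> ?I = 0" unfolding \<mu>_def using u1 by (simp add: sum_subtractf)
  moreover have "(\<Sum>j\<in>?I. \<mu> j *\<^sub>R v j) = w"
  proof -
    have "(\<Sum>j\<in>?I. \<mu> j *\<^sub>R v j) = (\<Sum>j\<in>?I. u (v j) *\<^sub>R v j) - (\<Sum>j\<in>?I. (if j = 0 then 1 else 0) *\<^sub>R v j)"
      unfolding \<mu>_def by (simp add: scaleR_diff_left sum_subtractf)
    also have "(\<Sum>j\<in>?I. (if j = 0 then 1 else 0) *\<^sub>R v j) = v 0"
    proof -
      have "(\<Sum>j\<in>?I. (if j = 0 then 1 else 0) *\<^sub>R v j) = (\<Sum>j\<in>?I. if j = 0 then v j else 0)"
        by (rule sum.cong) auto
      thus ?thesis by simp
    qed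
    finally show ?thesis using u2 by simp
  qed
  ultimately show ?thesis by metis
qed

lemma cp_hyp:
  fixes a :: "'a::euclidean_space"
  assumes "norm a = 1"
  shows "closest_point {x. a \<bullet> x = c} y = y - (a \<bullet> y - c) *\<^sub>R a"
proof (rule closest_point_unique[symmetric])
  have aa: "a \<bullet> a = 1" using assms by (simp add: norm_eq_1)
  show "convex {x. a \<bullet> x = c}" by (rule convex_hyperplane)
  show "closed {x. a \<bullet> x = c}" by (rule closed_hyperplane)
  show "y - (a \<bullet> y - c) *\<^sub>R a \<in> {x. a \<bullet> x = c}" using aa by (simp add: inner_diff_right inner_scaleR_right)
  show "\<forall>z\<in>{x. a \<bullet> x = c}. dist y (y - (a \<bullet> y - c) *\<^sub>R a) \<le> dist y z"
  proof
    fix z assume z: "z \<in> {x. a \<bullet> x = c}"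
    have "dist y (y - (a \<bullet> y - c) *\<^sub>R a) = norm ((a \<bullet> y - c) *\<^sub>R a)" by (simp add: dist_norm)
    also have "\<dots> = \<bar>a \<bullet> y - c\<bar>" using assms by simp
    also have "\<dots> = \<bar>a \<bullet> (y - z)\<bar>" using z by (simp add: inner_diff_right)
    also have "\<dots> \<le> norm a * norm (y - z)" by (rule Cauchy_Schwarz_ineq2)
    also have "\<dots> = dist y z" using assms by (simp add: dist_norm)
    finally show "dist y (y - (a \<bullet> y - c) *\<^sub>R a) \<le> dist y z" .
  qed
qed

lemma refl_hyp:
  fixes a :: "'a::euclidean_space"
  assumes "norm a = 1"
  shows "reflect_in {x. a \<bullet> x = c} y = y - (2 * (a \<bullet> y - c)) *\<^sub>R a"
  unfolding reflect_in_def cp_hyp[OF assms] by (simp add: algebra_simps scaleR_2)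

lemma angle_perp:
  fixes u w :: "'a::euclidean_space"
  assumes "u \<noteq> 0" "w \<noteq> 0" "vec_angle u w = pi / 2"
  shows "u \<bullet> w = 0"
proof -
  let ?t = "(u \<bullet> w) / (norm u * norm w)"
  have nz: "norm u * norm w > 0" using assms by simp
  have "\<bar>u \<bullet> w\<bar> \<le> norm u * norm w" by (rule Cauchy_Schwarz_ineq2)
  hence "- (norm u * norm w) \<le> u \<bullet> w" "u \<bullet> w \<le> norm u * norm w" by linarith+
  hence "-1 \<le> ?t" "?t \<le> 1" using nz by (simp_all add: field_simps)
  hence "cos (arccos ?t) = ?t" by (intro cos_arccos)
  hence "?t = 0" using assms(3) unfolding vec_angle_def by simp
  thus ?thesis using nz by auto
qed



locale cox =
  fixes v :: "nat \<Rightarrow> 'a::euclidean_space" and a :: "nat \<Rightarrow> 'a" and c :: "nat \<Rightarrow> real"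
  assumes unit: "i \<in> {0..DIM('a)} \<Longrightarrow> norm (a i) = 1"
    and hyp: "i \<in> {0..DIM('a)} \<Longrightarrow> facet_hyp v i = {x. a i \<bullet> x = c i}"
    and vin: "i \<in> {0..DIM('a)} \<Longrightarrow> j \<in> {0..DIM('a)} \<Longrightarrow> j \<noteq> i \<Longrightarrow> a i \<bullet> v j = c i"
    and vout: "i \<in> {0..DIM('a)} \<Longrightarrow> a i \<bullet> v i \<noteq> c i"
    and span: "\<exists>\<mu>. sum \<mu> {0..DIM('a)} = 0 \<and> w = (\<Sum>j\<in>{0..DIM('a)}. \<mu> j *\<^sub>R v j)"
begin

lemma L1:
  assumes "sum \<mu> {0..DIM('a)} = 0" "i \<in> {0..DIM('a)}"
  shows "a i \<bullet> (\<Sum>j\<in>{0..DIM('a)}. \<mu> j *\<^sub>R v j) = \<mu> i * (a i \<bullet> v i - c i)"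
proof -
  let ?I = "{0..DIM('a)}"
  have "a i \<bullet> (\<Sum>j\<in>?I. \<mu> j *\<^sub>R v j) = (\<Sum>j\<in>?I. \<mu> j * (a i \<bullet> v j))"
    by (simp add: inner_sum_right)
  also have "\<dots> = (\<Sum>j\<in>?I. \<mu> j * c i + \<mu> j * (a i \<bullet> v j - c i))"
    by (simp add: algebra_simps)
  also have "\<dots> = (\<Sum>j\<in>?I. \<mu> j) * c i + (\<Sum>j\<in>?I. \<mu> j * (a i \<bullet> v j - c i))"
    by (simp add: sum.distrib sum_distrib_right)
  also have "(\<Sum>j\<in>?I. \<mu> j * (a i \<bullet> v j - c i)) = \<mu> i * (a i \<bullet> v i - c i)"
    using assms(2) vin[OF assms(2)] by (subst sum.remove[of _ i]) (auto intro!: sum.neutral)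
  finally show ?thesis using assms(1) by simp
qed

lemma L2:
  assumes "\<forall>i\<in>{0..DIM('a)}. a i \<bullet> p = 0"
  shows "p = 0"
proof -
  obtain \<mu> where m: "sum \<mu> {0..DIM('a)} = 0" "p = (\<Sum>j\<in>{0..DIM('a)}. \<mu> j *\<^sub>R v j)"
    using span by blast
  have "\<forall>i\<in>{0..DIM('a)}. \<mu> i = 0"
  proof
    fix i assume i: "i \<in> {0..DIM('a)}"
    have "\<mu> i * (a i \<bullet> v i - c i) = 0" using L1[OF m(1) i] assms i m(2) by simp
    thus "\<mu> i = 0" using vout[OF i] by simp
  qed
  thus ?thesis using m(2) by simp
qed

lemma L3:
  assumes k: "k \<in> {0..DIM('a)}" and r: "(\<Sum>i\<in>{0..DIM('a)} - {k}. \<nu> i *\<^sub>R a i) = 0"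
    and j: "j \<in> {0..DIM('a)} - {k}"
  shows "\<nu> j = 0"
proof -
  let ?J = "{0..DIM('a)} - {k}"
  have "0 = (\<Sum>i\<in>?J. \<nu> i *\<^sub>R a i) \<bullet> (v j - v k)" using r by simp
  also have "\<dots> = (\<Sum>i\<in>?J. \<nu> i * (a i \<bullet> v j - a i \<bullet> v k))"
    by (simp add: inner_sum_left inner_diff_right right_diff_distrib sum_subtractf)
  also have "\<dots> = (\<Sum>i\<in>?J. \<nu> i * (a i \<bullet> v j - c i))"
    using vin k by (intro sum.cong) auto
  also have "\<dots> = \<nu> j * (a j \<bullet> v j - c j)"
    using j vin by (subst sum.remove[of _ j]) (auto intro!: sum.neutral)
  finally show ?thesis using vout j by simp
qed

lemma L4:
  assumes rl: "(\<Sum>i\<in>{0..DIM('a)}. la i *\<^sub>R a i) = 0" and rm: "(\<Sum>i\<in>{0..DIM('a)}. \<mu> i *\<^sub>R a i) = 0"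
    and k: "k \<in> {0..DIM('a)}" and lk: "la k \<noteq> 0" and i: "i \<in> {0..DIM('a)}"
  shows "\<mu> i = (\<mu> k / la k) * la i"
proof -
  let ?I = "{0..DIM('a)}"
  define \<nu> where "\<nu> j = \<mu> j - (\<mu> k / la k) * la j" for j
  have "(\<Sum>j\<in>?I. \<nu> j *\<^sub>R a j) = (\<Sum>j\<in>?I. \<mu> j *\<^sub>R a j) - (\<mu> k / la k) *\<^sub>R (\<Sum>j\<in>?I. la j *\<^sub>R a j)"
    unfolding \<nu>_def by (simp add: scaleR_diff_left sum_subtractf scaleR_sum_right)
  hence s: "(\<Sum>j\<in>?I. \<nu> j *\<^sub>R a j) = 0" using rl rm by simp
  have nk: "\<nu> k = 0" unfolding \<nu>_def using lk by simp
  have "(\<Sum>j\<in>?I - {k}. \<nu> j *\<^sub>R a j) = 0"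
    using s k nk by (subst (asm) sum.remove[of _ k]) auto
  hence "i \<noteq> k \<Longrightarrow> \<nu> i = 0" using L3[OF k] i by blast
  thus ?thesis using nk unfolding \<nu>_def by (cases "i = k") auto
qed

definition qq :: "nat set \<Rightarrow> 'a \<Rightarrow> 'a" where "qq S z = (\<Sum>i\<in>S. (a i \<bullet> z) *\<^sub>R a i)"
definition PP :: "nat set \<Rightarrow> 'a \<Rightarrow> 'a" where "PP S x = x - 2 *\<^sub>R (\<Sum>i\<in>S. (a i \<bullet> x - c i) *\<^sub>R a i)"
definition RR :: "nat set \<Rightarrow> 'a \<Rightarrow> 'a" where "RR S z = z - 2 *\<^sub>R qq S z"
definition orth :: "nat set \<Rightarrow> bool" where
  "orth S \<longleftrightarrow> S \<subseteq> {0..DIM('a)} \<and> (\<forall>i\<in>S. \<forall>j\<in>S. i \<noteq> j \<longrightarrow> a i \<bullet> a j = 0)"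

lemma orth_fin: "orth S \<Longrightarrow> finite S" unfolding orth_def using finite_subset by blast

lemma q_inner:
  assumes "orth S" "i \<in> S"
  shows "a i \<bullet> qq S z = a i \<bullet> z"
proof -
  have fin: "finite S" using orth_fin assms(1) .
  have ai: "a i \<bullet> a i = 1" using assms unit unfolding orth_def by (auto simp: norm_eq_1)
  have "a i \<bullet> qq S z = (\<Sum>j\<in>S. (a j \<bullet> z) * (a i \<bullet> a j))" unfolding qq_def by (simp add: inner_sum_right)
  also have "\<dots> = (a i \<bullet> z) * (a i \<bullet> a i)"
    using assms fin unfolding orth_def by (subst sum.remove[of _ i]) (auto intro!: sum.neutral)
  finally show ?thesis using ai by simp
qed

lemma q_add: "qq S (y + z) = qq S y + qq S z"
  unfolding qq_def by (simp add: inner_add_right scaleR_add_left sum.distrib)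
lemma q_diff: "qq S (y - z) = qq S y - qq S z"
  unfolding qq_def by (simp add: inner_diff_right scaleR_diff_left sum_subtractf)
lemma q_scale: "qq S (t *\<^sub>R z) = t *\<^sub>R qq S z"
  unfolding qq_def by (simp add: scaleR_sum_right)

lemma R_add: "RR S (y + z) = RR S y + RR S z" unfolding RR_def q_add by (simp add: algebra_simps)
lemma R_diff: "RR S (y - z) = RR S y - RR S z" unfolding RR_def q_diff by (simp add: algebra_simps)
lemma R_scale: "RR S (t *\<^sub>R z) = t *\<^sub>R RR S z" unfolding RR_def q_scale by (simp add: algebra_simps)

lemma P_add: "PP S (x + z) = PP S x + RR S z"
proof -
  have "(\<Sum>i\<in>S. (a i \<bullet> (x + z) - c i) *\<^sub>R a i) = (\<Sum>i\<in>S. (a i \<bullet> x - c i) *\<^sub>R a i) + qq S z"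
  proof -
    have "(\<Sum>i\<in>S. (a i \<bullet> (x + z) - c i) *\<^sub>R a i) = (\<Sum>i\<in>S. (a i \<bullet> x - c i) *\<^sub>R a i + (a i \<bullet> z) *\<^sub>R a i)"
      by (rule sum.cong) (simp_all add: inner_add_right algebra_simps)
    thus ?thesis unfolding qq_def by (simp add: sum.distrib)
  qed
  thus ?thesis unfolding PP_def RR_def by (simp add: algebra_simps)
qed

lemma q_sym: "y \<bullet> qq S z = qq S y \<bullet> z"
  unfolding qq_def inner_sum_right inner_sum_left
  by (rule sum.cong) (simp_all add: inner_commute)

lemma R_sym: "y \<bullet> RR S z = RR S y \<bullet> z"
  unfolding RR_def by (simp add: inner_diff_right inner_diff_left q_sym)

lemma q_R: assumes "orth S" shows "qq S (RR S z) = - qq S z"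
proof -
  have "qq S (qq S z) = qq S z" unfolding qq_def[of S "qq S z"]
    using q_inner[OF assms] by (simp add: qq_def[symmetric] cong: sum.cong)
  thus ?thesis unfolding RR_def q_diff q_scale by (simp add: algebra_simps scaleR_2)
qed

lemma R_inv: assumes "orth S" shows "RR S (RR S z) = z"
  using q_R[OF assms] unfolding RR_def[of S "RR S z"] by (simp add: RR_def)

lemma P_fix: assumes "\<forall>i\<in>S. a i \<bullet> x = c i" shows "PP S x = x"
  unfolding PP_def using assms by simp

lemma F1:
  assumes "S \<subseteq> {0..DIM('a)}" "x \<in> face_hull v S" "i \<in> S"
  shows "a i \<bullet> x = c i"
proof -
  have "face_of_walls v S \<subseteq> \<Inter> ((\<lambda>i. {x. a i \<bullet> x = c i}) ` S)"
  proof
    fix x assume "x \<in> face_of_walls v S"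
    hence h: "\<forall>i\<in>S. x \<in> facet_hyp v i" by (auto simp: face_of_walls_def)
    have "\<forall>i\<in>S. a i \<bullet> x = c i"
    proof
      fix i assume i: "i \<in> S"
      hence "i \<in> {0..DIM('a)}" using assms(1) by auto
      thus "a i \<bullet> x = c i" using h i hyp by blast
    qed
    thus "x \<in> \<Inter> ((\<lambda>i. {x. a i \<bullet> x = c i}) ` S)" by auto
  qed
  moreover have "affine (\<Inter> ((\<lambda>i. {x. a i \<bullet> x = c i}) ` S))"
    by (rule affine_Inter) (auto intro: affine_hyperplane)
  ultimately have "face_hull v S \<subseteq> \<Inter> ((\<lambda>i. {x. a i \<bullet> x = c i}) ` S)"
    unfolding face_hull_def by (intro hull_minimal) auto
  thus ?thesis using assms(2,3) by blast
qed

lemma F2: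
  assumes "S \<subseteq> {0..DIM('a)}" "j \<in> {0..DIM('a)}" "j \<notin> S"
  shows "v j \<in> face_hull v S"
proof -
  have "v j \<in> simplex_of v" unfolding simplex_of_def using assms(2) by (intro hull_inc) auto
  moreover have "\<forall>i\<in>S. v j \<in> facet_hyp v i"
  proof
    fix i assume i: "i \<in> S"
    hence i': "i \<in> {0..DIM('a)}" using assms(1) by auto
    have "j \<noteq> i" using i assms(3) by auto
    thus "v j \<in> facet_hyp v i" using hyp[OF i'] vin[OF i' assms(2)] by simp
  qed
  ultimately have "v j \<in> face_of_walls v S" unfolding face_of_walls_def by auto
  thus ?thesis unfolding face_hull_def by (rule hull_inc)
qed

lemma variational:
  assumes S: "S \<subseteq> {0..DIM('a)}" and x: "x \<in> face_hull v S"
    and mn: "\<forall>z\<in>face_hull v S. dist x y \<le> dist z y"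
    and w: "\<forall>i\<in>S. a i \<bullet> w = 0"
  shows "(y - x) \<bullet> w = 0"
proof -
  let ?I = "{0..DIM('a)}"
  let ?A = "face_hull v S"
  obtain \<mu> where m: "sum \<mu> ?I = 0" "w = (\<Sum>j\<in>?I. \<mu> j *\<^sub>R v j)" using span by blast
  have mu0: "\<mu> i = 0" if "i \<in> S" for i
  proof -
    have i: "i \<in> ?I" using that S by auto
    have "\<mu> i * (a i \<bullet> v i - c i) = 0" using L1[OF m(1) i] w that m(2) by simp
    thus ?thesis using vout[OF i] by simp
  qed
  have aff: "affine ?A" unfolding face_hull_def by simp
  have sub: "subspace ((\<lambda>z. z - x) ` ?A)" by (rule affine_diffs_subspace_subtract[OF aff x])
  have w2: "w = (\<Sum>j\<in>?I. \<mu> j *\<^sub>R (v j - x))"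
    using m by (simp add: scaleR_diff_right sum_subtractf scaleR_sum_left[symmetric])
  have "w \<in> (\<lambda>z. z - x) ` ?A"
    unfolding w2
  proof (rule subspace_sum[OF sub])
    fix j assume j: "j \<in> ?I"
    show "\<mu> j *\<^sub>R (v j - x) \<in> (\<lambda>z. z - x) ` ?A"
    proof (cases "j \<in> S")
      case True thus ?thesis using mu0 subspace_0[OF sub] by simp
    next
      case False
      hence "v j - x \<in> (\<lambda>z. z - x) ` ?A" using F2[OF S j False] by blast
      thus ?thesis by (rule subspace_scale[OF sub])
    qed
  qed
  hence tw: "x + t *\<^sub>R w \<in> ?A" for t
  proof -
    assume "w \<in> (\<lambda>z. z - x) ` ?A"
    hence "t *\<^sub>R w \<in> (\<lambda>z. z - x) ` ?A" by (rule subspace_scale[OF sub])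
    then obtain z where "z \<in> ?A" "t *\<^sub>R w = z - x" by blast
    thus ?thesis by simp
  qed
  show ?thesis
  proof (cases "w = 0")
    case True thus ?thesis by simp
  next
    case False
    let ?e = "y - x"
    define t where "t = (?e \<bullet> w) / (w \<bullet> w)"
    have ww: "w \<bullet> w > 0" using False by simp
    have "dist x y \<le> dist (x + t *\<^sub>R w) y" using mn tw by blast
    hence "norm ?e \<le> norm (t *\<^sub>R w - ?e)" by (simp add: dist_norm norm_minus_commute algebra_simps)
    hence "(norm ?e)^2 \<le> (norm (t *\<^sub>R w - ?e))^2" by (simp add: power_mono)
    hence "?e \<bullet> ?e \<le> (t *\<^sub>R w - ?e) \<bullet> (t *\<^sub>R w - ?e)" by (simp add: power2_norm_eq_inner)
    hence "0 \<le> t * t * (w \<bullet> w) - 2 * t * (?e \<bullet> w)"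
      by (simp add: inner_diff_left inner_diff_right inner_commute algebra_simps)
    hence "0 \<le> - ((?e \<bullet> w)^2 / (w \<bullet> w))" unfolding t_def using ww
      by (simp add: field_simps power2_eq_square)
    hence "(?e \<bullet> w)^2 / (w \<bullet> w) \<le> 0" by simp
    hence "(?e \<bullet> w)^2 \<le> 0" using ww by (simp add: divide_le_0_iff)
    thus ?thesis by simp
  qed
qed

lemma no_common: "\<not> (\<forall>i\<in>{0..DIM('a)}. a i \<bullet> x = c i)"
proof
  let ?I = "{0..DIM('a)}"
  assume h: "\<forall>i\<in>?I. a i \<bullet> x = c i"
  obtain \<mu> where m: "sum \<mu> ?I = 0" "x - v 0 = (\<Sum>j\<in>?I. \<mu> j *\<^sub>R v j)" using span by blast
  have z: "\<mu> i = 0" if i: "i \<in> ?I - {0}" for i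
  proof -
    have i': "i \<in> ?I" using i by auto
    have "a i \<bullet> (x - v 0) = 0" using h i' vin[OF i', of 0] i by (simp add: inner_diff_right)
    hence "\<mu> i * (a i \<bullet> v i - c i) = 0" using L1[OF m(1) i'] m(2) by simp
    thus ?thesis using vout[OF i'] by simp
  qed
  have z0: "0 \<in> ?I" by simp
  have "a 0 \<bullet> (x - v 0) = - (a 0 \<bullet> v 0 - c 0)" using h z0 by (simp add: inner_diff_right)
  hence "\<mu> 0 * (a 0 \<bullet> v 0 - c 0) = - (a 0 \<bullet> v 0 - c 0)" using L1[OF m(1) z0] m(2) by simp
  hence "(\<mu> 0 + 1) * (a 0 \<bullet> v 0 - c 0) = 0" by (simp add: algebra_simps)
  hence m0: "\<mu> 0 = -1" using vout[OF z0] by simp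
  have "sum \<mu> ?I = \<mu> 0 + sum \<mu> (?I - {0})" by (subst sum.remove[OF _ z0]) auto
  also have "sum \<mu> (?I - {0}) = 0" using z by simp
  finally show False using m(1) m0 by simp
qed

lemma q_fix:
  assumes "orth S" and perp: "\<And>w. (\<forall>i\<in>S. a i \<bullet> w = 0) \<Longrightarrow> e \<bullet> w = 0"
  shows "qq S e = e"
proof -
  let ?f = "e - qq S e"
  have af: "\<forall>i\<in>S. a i \<bullet> ?f = 0" using q_inner[OF assms(1)] by (simp add: inner_diff_right)
  hence ef: "e \<bullet> ?f = 0" by (rule perp)
  have qf: "qq S ?f = 0" unfolding qq_def[of S ?f] using af by (intro sum.neutral) simp
  have "?f \<bullet> ?f = e \<bullet> ?f - qq S e \<bullet> ?f" by (simp add: inner_diff_left)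
  also have "qq S e \<bullet> ?f = e \<bullet> qq S ?f" by (simp add: q_sym)
  finally have "?f \<bullet> ?f = 0" using ef qf by simp
  thus ?thesis by simp
qed

lemma R0: "RR S 0 = 0" using R_scale[of S 0 0] by simp

lemma kernel:
  assumes part: "S0 \<union> S1 = {0..DIM('a)}" "S0 \<inter> S1 = {}" and o0: "orth S0" and o1: "orth S1"
    and d0: "qq S0 d = d" and d1: "qq S1 d = d" and dnz: "d \<noteq> 0"
    and K: "RR S1 (RR S0 z) = z"
  shows "\<exists>s. z = s *\<^sub>R d"
proof -
  let ?I = "{0..DIM('a)}"
  have f0: "finite S0" and f1: "finite S1" using orth_fin o0 o1 by auto
  have "RR S0 z = RR S1 z" using K R_inv[OF o1, of "RR S0 z"] by simp
  hence qz: "qq S0 z = qq S1 z" unfolding RR_def by simp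
  have "z - qq S0 z = 0"
  proof (rule L2, rule ballI)
    fix i assume i: "i \<in> ?I"
    show "a i \<bullet> (z - qq S0 z) = 0"
    proof (cases "i \<in> S0")
      case True thus ?thesis using q_inner[OF o0 True] by (simp add: inner_diff_right)
    next
      case False hence "i \<in> S1" using i part by auto
      thus ?thesis using q_inner[OF o1] qz by (simp add: inner_diff_right)
    qed
  qed
  hence z0: "qq S0 z = z" and z1: "qq S1 z = z" using qz by auto
  define la where "la i = (if i \<in> S0 then a i \<bullet> d else - (a i \<bullet> d))" for i
  define mu where "mu i = (if i \<in> S0 then a i \<bullet> z else - (a i \<bullet> z))" for i
  have split: "(\<Sum>i\<in>?I. g i) = (\<Sum>i\<in>S0. g i) + (\<Sum>i\<in>S1. g i)" for g :: "nat \<Rightarrow> 'a"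
    unfolding part(1)[symmetric] using f0 f1 part(2) by (rule sum.union_disjoint)
  have s1: "(\<Sum>i\<in>S1. h i) = (\<Sum>i\<in>S1. h' i)" if "\<And>i. i \<notin> S0 \<Longrightarrow> h i = h' i" for h h' :: "nat \<Rightarrow> 'a"
    using part(2) that by (intro sum.cong) auto
  have rl: "(\<Sum>i\<in>?I. la i *\<^sub>R a i) = 0"
    unfolding split la_def using s1[of "\<lambda>i. (if i \<in> S0 then a i \<bullet> d else - (a i \<bullet> d)) *\<^sub>R a i" "\<lambda>i. - ((a i \<bullet> d) *\<^sub>R a i)"]
    using d0 d1 unfolding qq_def by (simp add: sum_negf)
  have rm: "(\<Sum>i\<in>?I. mu i *\<^sub>R a i) = 0"
    unfolding split mu_def using s1[of "\<lambda>i. (if i \<in> S0 then a i \<bullet> z else - (a i \<bullet> z)) *\<^sub>R a i" "\<lambda>i. - ((a i \<bullet> z) *\<^sub>R a i)"]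
    using z0 z1 unfolding qq_def by (simp add: sum_negf)
  obtain k where k: "k \<in> S0" "a k \<bullet> d \<noteq> 0"
  proof (rule ccontr)
    assume "\<not> thesis"
    hence "\<forall>k\<in>S0. a k \<bullet> d = 0" using that by blast
    hence "qq S0 d = 0" unfolding qq_def by simp
    thus False using d0 dnz by simp
  qed
  have kI: "k \<in> ?I" using k part by auto
  have lk: "la k \<noteq> 0" using k unfolding la_def by simp
  define s where "s = mu k / la k"
  have "\<forall>i\<in>S0. mu i = s * la i"
  proof
    fix i assume "i \<in> S0"
    hence "i \<in> ?I" using part by auto
    thus "mu i = s * la i" using L4[OF rl rm kI lk] unfolding s_def by blast
  qed
  hence "\<forall>i\<in>S0. a i \<bullet> z = s * (a i \<bullet> d)" unfolding mu_def la_def by auto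
  hence "qq S0 z = s *\<^sub>R qq S0 d" unfolding qq_def by (simp add: scaleR_sum_right)
  thus ?thesis using z0 d0 by metis
qed

lemma main:
  assumes part: "S0 \<union> S1 = {0..DIM('a)}" "S0 \<inter> S1 = {}" and o0: "orth S0" and o1: "orth S1"
    and x0: "x0 \<in> face_hull v S0" and x1: "x1 \<in> face_hull v S1"
    and mn: "\<forall>y0\<in>face_hull v S0. \<forall>y1\<in>face_hull v S1. dist x0 x1 \<le> dist y0 y1"
  shows "min_set (PP S1 \<circ> PP S0) = affine hull {x0, x1}"
proof -
  let ?I = "{0..DIM('a)}"
  let ?g = "PP S1 \<circ> PP S0"
  have S0I: "S0 \<subseteq> ?I" and S1I: "S1 \<subseteq> ?I" using part by auto
  define d where "d = x1 - x0"
  have fix0: "\<forall>i\<in>S0. a i \<bullet> x0 = c i" using F1[OF S0I x0] by blast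
  have fix1: "\<forall>i\<in>S1. a i \<bullet> x1 = c i" using F1[OF S1I x1] by blast
  have mn0: "\<forall>z\<in>face_hull v S0. dist x0 x1 \<le> dist z x1" using mn x1 by blast
  have mn1: "\<forall>z\<in>face_hull v S1. dist x1 x0 \<le> dist z x0"   proof
    fix z assume "z \<in> face_hull v S1"
    hence "dist x0 x1 \<le> dist x0 z" using mn x0 by blast
    thus "dist x1 x0 \<le> dist z x0" by (simp add: dist_commute)
  qed
  have "qq S0 (x1 - x0) = x1 - x0"
    by (rule q_fix[OF o0]) (rule variational[OF S0I x0 mn0], simp)
  hence d0: "qq S0 d = d" unfolding d_def .
  have "qq S1 (x0 - x1) = x0 - x1"
    by (rule q_fix[OF o1]) (rule variational[OF S1I x1 mn1], simp)
  hence d1: "qq S1 d = d" unfolding d_def q_diff by (simp add: algebra_simps)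
  have dnz: "d \<noteq> 0"
  proof
    assume "d = 0"
    hence "x1 = x0" unfolding d_def by simp
    hence "\<forall>i\<in>?I. a i \<bullet> x0 = c i" using fix0 fix1 part by auto
    thus False using no_common by blast
  qed
  have R0d: "RR S0 d = - d" and R1d: "RR S1 d = - d" unfolding RR_def using d0 d1 by (simp_all add: scaleR_2)
  define K where "K z = RR S1 (RR S0 z) - z" for z
  have gy: "?g (x0 + z) - (x0 + z) = 2 *\<^sub>R d + K z" for z
  proof -
    have "PP S0 (x0 + z) = x0 + RR S0 z" using P_add P_fix[OF fix0] by simp
    also have "\<dots> = x1 + (RR S0 z - d)" unfolding d_def by simp
    finally have "?g (x0 + z) = PP S1 (x1 + (RR S0 z - d))" by simp
    also have "\<dots> = x1 + RR S1 (RR S0 z) + d" using P_add P_fix[OF fix1] R_diff R1d by simp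
    finally show ?thesis unfolding K_def d_def by (simp add: algebra_simps scaleR_2)
  qed
  have dK: "d \<bullet> K z = 0" for z
  proof -
    have "d \<bullet> RR S1 (RR S0 z) = RR S1 d \<bullet> RR S0 z" by (rule R_sym)
    also have "\<dots> = - (d \<bullet> RR S0 z)" using R1d by simp
    also have "d \<bullet> RR S0 z = RR S0 d \<bullet> z" by (rule R_sym)
    finally show ?thesis unfolding K_def using R0d by (simp add: inner_diff_right)
  qed
  have disp: "(dist (x0 + z) (?g (x0 + z)))^2 = 4 * (d \<bullet> d) + (norm (K z))^2" for z
  proof -
    have "(dist (x0 + z) (?g (x0 + z)))^2 = (norm (2 *\<^sub>R d + K z))^2"
      using gy[of z] by (metis dist_norm dist_commute)
    also have "\<dots> = (2 *\<^sub>R d + K z) \<bullet> (2 *\<^sub>R d + K z)" by (simp add: power2_norm_eq_inner)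
    also have "\<dots> = 4 * (d \<bullet> d) + K z \<bullet> K z"
      using dK[of z] by (simp add: inner_add_left inner_add_right inner_commute)
    finally show ?thesis by (simp add: power2_norm_eq_inner)
  qed
  have K0: "K 0 = 0" unfolding K_def using R0 by simp
  have Kd: "K (s *\<^sub>R d) = 0" for s
    unfolding K_def using R_scale[of S0 s d] R_scale[of S1 "-s" d] R0d R1d by simp
  have dispd: "(dist (x0 + z) (?g (x0 + z)))^2 = 4 * (d \<bullet> d)" if "K z = 0" for z
    using disp[of z] that by simp
  have line: "affine hull {x0, x1} = {x0 + s *\<^sub>R d | s. True}"
  proof -
    have "affine hull {x0, x1} = {u *\<^sub>R x0 + w *\<^sub>R x1 |u w. u + w = 1}" by (rule affine_hull_2)
    also have "\<dots> = {x0 + s *\<^sub>R d | s. True}"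
    proof (intro set_eqI iffI)
      fix y assume "y \<in> {u *\<^sub>R x0 + w *\<^sub>R x1 |u w. u + w = 1}"
      then obtain u w where "u + w = 1" "y = u *\<^sub>R x0 + w *\<^sub>R x1" by blast
      hence "y = (1 - w) *\<^sub>R x0 + w *\<^sub>R x1" by (metis add_diff_cancel_right')
      hence "y = x0 + w *\<^sub>R d" unfolding d_def by (simp add: algebra_simps)
      thus "y \<in> {x0 + s *\<^sub>R d | s. True}" by blast
    next
      fix y assume "y \<in> {x0 + s *\<^sub>R d | s. True}"
      then obtain s where "y = x0 + s *\<^sub>R d" by blast
      hence "y = (1 - s) *\<^sub>R x0 + s *\<^sub>R x1" unfolding d_def by (simp add: algebra_simps)
      thus "y \<in> {u *\<^sub>R x0 + w *\<^sub>R x1 |u w. u + w = 1}" by force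
    qed
    finally show ?thesis .
  qed
  have sq: "dist p (?g p) \<le> dist q (?g q) \<longleftrightarrow> (dist p (?g p))^2 \<le> (dist q (?g q))^2" for p q
    using abs_le_square_iff[of "dist p (?g p)" "dist q (?g q)"] by simp
  have all: "y = x0 + (y - x0)" for y by simp
  show ?thesis unfolding line
  proof (intro set_eqI iffI)
    fix y assume "y \<in> min_set ?g"
    hence "dist y (?g y) \<le> dist x0 (?g x0)" unfolding min_set_def by blast
    hence "(dist (x0 + (y - x0)) (?g (x0 + (y - x0))))^2 \<le> (dist (x0 + 0) (?g (x0 + 0)))^2"
      using sq by simp
    hence "(norm (K (y - x0)))^2 \<le> 0" unfolding disp K0 by simp
    hence "K (y - x0) = 0" by simp
    hence "RR S1 (RR S0 (y - x0)) = y - x0" unfolding K_def by simp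
    then obtain s where "y - x0 = s *\<^sub>R d" using kernel[OF part o0 o1 d0 d1 dnz] by blast
    hence "y = x0 + s *\<^sub>R d" by (simp add: algebra_simps)
    thus "y \<in> {x0 + s *\<^sub>R d | s. True}" by blast
  next
    fix y assume "y \<in> {x0 + s *\<^sub>R d | s. True}"
    then obtain s where y: "y = x0 + s *\<^sub>R d" by blast
    show "y \<in> min_set ?g" unfolding min_set_def
    proof (intro CollectI allI)
      fix y'
      have "(dist y (?g y))^2 = 4 * (d \<bullet> d)" unfolding y by (rule dispd[OF Kd])
      also have "\<dots> \<le> (dist (x0 + (y' - x0)) (?g (x0 + (y' - x0))))^2" unfolding disp by simp
      finally show "dist y (?g y) \<le> dist y' (?g y')" using sq by simp
    qed
  qed
qed

lemma P_insert:
  assumes o: "orth S" and i: "i \<in> S" and A: "A \<subseteq> S" "i \<notin> A"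
  shows "PP A (reflect_in (facet_hyp v i) y) = PP (insert i A) y"
proof -
  have iI: "i \<in> {0..DIM('a)}" using o i unfolding orth_def by auto
  have finA: "finite A" using orth_fin[OF o] A(1) finite_subset by blast
  have r: "reflect_in (facet_hyp v i) y = y - (2 * (a i \<bullet> y - c i)) *\<^sub>R a i"
    using refl_hyp[OF unit[OF iI]] hyp[OF iI] by simp
  have aj: "a j \<bullet> reflect_in (facet_hyp v i) y = a j \<bullet> y" if j: "j \<in> A" for j
  proof -
    have "a j \<bullet> a i = 0" using o j A i unfolding orth_def by auto
    thus ?thesis unfolding r by (simp add: inner_diff_right)
  qed
  have "(\<Sum>j\<in>A. (a j \<bullet> reflect_in (facet_hyp v i) y - c j) *\<^sub>R a j) = (\<Sum>j\<in>A. (a j \<bullet> y - c j) *\<^sub>R a j)"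
    using aj by (intro sum.cong) auto
  thus ?thesis unfolding PP_def[of A] PP_def[of "insert i A"] sum.insert[OF finA A(2)]
    unfolding r by (simp add: algebra_simps scaleR_2)
qed

lemma fold_refl:
  assumes o: "orth S"
  shows "distinct xs \<Longrightarrow> set xs \<subseteq> S \<Longrightarrow>
    fold (\<lambda>i f. reflect_in (facet_hyp v i) \<circ> f) xs g = PP (set xs) \<circ> g"
proof (induction xs arbitrary: g)
  case Nil thus ?case by (simp add: PP_def fun_eq_iff)
next
  case (Cons i xs)
  have "fold (\<lambda>i f. reflect_in (facet_hyp v i) \<circ> f) (i # xs) g
      = fold (\<lambda>i f. reflect_in (facet_hyp v i) \<circ> f) xs (reflect_in (facet_hyp v i) \<circ> g)" by simp
  also have "\<dots> = PP (set xs) \<circ> (reflect_in (facet_hyp v i) \<circ> g)"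
    using Cons.IH[of "reflect_in (facet_hyp v i) \<circ> g"] Cons.prems unfolding comp_def by simp
  also have "\<dots> = PP (set (i # xs)) \<circ> g"
    using P_insert[OF o, of i "set xs"] Cons.prems by (auto simp: fun_eq_iff)
  finally show ?case .
qed

lemma prod_refl_PP: assumes "orth S" shows "prod_refl v S = PP S"
proof -
  have fin: "finite S" using orth_fin[OF assms] .
  show ?thesis unfolding prod_refl_def
    using fold_refl[OF assms, of "sorted_list_of_set S" id] fin by simp
qed

end


lemma orth_from:
  fixes v :: "nat \<Rightarrow> 'a::euclidean_space"
  assumes "cox v a c" and S: "S \<subseteq> {0..DIM('a)}" and ne: "\<forall>i\<in>S. \<forall>j\<in>S. \<not> cox_edge v i j"
  shows "cox.orth a S"
proof -
  interpret cox v a c by fact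
  have inw: "inward_normal v i = (a i \<bullet> v i - c i) *\<^sub>R a i" if i: "i \<in> {0..DIM('a)}" for i
    unfolding inward_normal_def hyp[OF i] cp_hyp[OF unit[OF i]] by simp
  show ?thesis unfolding orth_def
  proof (intro conjI S ballI impI)
    fix i j assume i: "i \<in> S" and j: "j \<in> S" and ij: "i \<noteq> j"
    have iI: "i \<in> {0..DIM('a)}" and jI: "j \<in> {0..DIM('a)}" using i j S by auto
    have "dihedral_angle v i j = pi / 2" using ne i j ij unfolding cox_edge_def by blast
    hence va: "vec_angle (inward_normal v i) (inward_normal v j) = pi / 2"
      unfolding dihedral_angle_def by simp
    have ni: "inward_normal v i \<noteq> 0" unfolding inw[OF iI] using vout[OF iI] unit[OF iI] by auto
    have nj: "inward_normal v j \<noteq> 0" unfolding inw[OF jI] using vout[OF jI] unit[OF jI] by auto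
    have "inward_normal v i \<bullet> inward_normal v j = 0" by (rule angle_perp[OF ni nj va])
    moreover have "inward_normal v i \<bullet> inward_normal v j = (a i \<bullet> v i - c i) * (a j \<bullet> v j - c j) * (a i \<bullet> a j)"
      unfolding inw[OF iI] inw[OF jI] by (simp add: algebra_simps)
    ultimately have "(a i \<bullet> v i - c i) * (a j \<bullet> v j - c j) * (a i \<bullet> a j) = 0" by simp
    thus "a i \<bullet> a j = 0" using vout[OF iI] vout[OF jI] by simp
  qed
qed

theorem proposition8p8:
  fixes v :: "nat \<Rightarrow> 'a::euclidean_space" and S0 S1 :: "nat set" and x0 x1 :: 'a
  assumes "coxeter_simplex v"
    and "irreducible_coxeter v"
    and "\<not> type_A_tilde v"
    and "S0 \<union> S1 = {0..DIM('a)}" and "S0 \<inter> S1 = {}"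
    and "\<forall>i\<in>S0. \<forall>j\<in>S0. \<not> cox_edge v i j"
    and "\<forall>i\<in>S1. \<forall>j\<in>S1. \<not> cox_edge v i j"
    and "x0 \<in> face_hull v S0" and "x1 \<in> face_hull v S1"
    and "\<forall>y0\<in>face_hull v S0. \<forall>y1\<in>face_hull v S1. dist x0 x1 \<le> dist y0 y1"
  shows "min_set (prod_refl v S1 \<circ> prod_refl v S0) = affine hull {x0, x1}
       \<and> min_set (prod_refl v S0 \<circ> prod_refl v S1) = affine hull {x0, x1}"
proof -
  let ?I = "{0..DIM('a)}"
  have inj: "inj_on v ?I" and ind: "\<not> affine_dependent (v ` ?I)"
    using assms(1) unfolding coxeter_simplex_def by auto
  have "\<forall>i. \<exists>p. i \<in> ?I \<longrightarrow> norm (fst p) = 1 \<and> facet_hyp v i = {x. fst p \<bullet> x = snd p}"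
    using setup_hyp[OF inj ind] by fastforce
  then obtain f where f: "\<And>i. i \<in> ?I \<Longrightarrow> norm (fst (f i)) = 1 \<and> facet_hyp v i = {x. fst (f i) \<bullet> x = snd (f i)}"
    by metis
  define a where "a i = fst (f i)" for i
  define c where "c i = snd (f i)" for i
  have ax: "i \<in> ?I \<Longrightarrow> norm (a i) = 1" "i \<in> ?I \<Longrightarrow> facet_hyp v i = {x. a i \<bullet> x = c i}" for i
    using f unfolding a_def c_def by auto
  have cx: "cox v a c"
  proof
    show "\<And>i. i \<in> ?I \<Longrightarrow> norm (a i) = 1" by (rule ax)
    show "\<And>i. i \<in> ?I \<Longrightarrow> facet_hyp v i = {x. a i \<bullet> x = c i}" by (rule ax)
    show "a i \<bullet> v j = c i" if "i \<in> ?I" "j \<in> ?I" "j \<noteq> i" for i j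
      using vertex_in_hyp[OF inj ind that(1,2)] that ax(2)[OF that(1)] by auto
    show "a i \<bullet> v i \<noteq> c i" if "i \<in> ?I" for i
      using vertex_in_hyp[OF inj ind that that] ax(2)[OF that] by auto
    show "\<exists>\<mu>. sum \<mu> ?I = 0 \<and> w = (\<Sum>j\<in>?I. \<mu> j *\<^sub>R v j)" for w
      by (rule spanning[OF inj ind])
  qed
  interpret cox v a c by (rule cx)
  have o0: "orth S0" using orth_from[OF cx _ assms(6)] assms(4) by auto
  have o1: "orth S1" using orth_from[OF cx _ assms(7)] assms(4) by auto
  have m1: "min_set (PP S1 \<circ> PP S0) = affine hull {x0, x1}"
    by (rule main[OF assms(4,5) o0 o1 assms(8,9,10)])
  have mn': "\<forall>y0\<in>face_hull v S1. \<forall>y1\<in>face_hull v S0. dist x1 x0 \<le> dist y0 y1"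
    using assms(10) by (metis dist_commute)
  have m2: "min_set (PP S0 \<circ> PP S1) = affine hull {x1, x0}"
    by (rule main[OF _ _ o1 o0 assms(9,8) mn']) (use assms(4,5) in auto)
  show ?thesis using m1 m2 prod_refl_PP[OF o0] prod_refl_PP[OF o1] by (simp add: insert_commute)
qed

end
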